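(* Let $f$ be a quadratic form in $s$ variables with integer coefficients, $b,a\in\mathbb{Z}$, and let $q_1,q_2,W_1,W_2$ be positive integers with $\gcd(q_1W_1,q_2W_2)=1$. Then $$S^\ast_{W_1W_2,b}(q_1q_2,a)=S^\ast_{W_1,b}(q_1,a\overline{q_2})\,S^\ast_{W_2,b}(q_2,a\overline{q_1}),$$ where $\overline{q_2}$ denotes an inverse of $q_2$ modulo $q_1$ and $\overline{q_1}$ an inverse of $q_1$ modulo $q_2$.
   Context: $e(z)=e^{2\pi iz}$. For positive integers $q,W$ and integers $a,b$, $$S^\ast_{W,b}(q,a)=\sum_{\substack{1\le c_1,\ldots,c_s\le qW\\ \gcd(c_j,q)=1,\ c_j\equiv b\ (\mathrm{mod}\ W)\ (1\le j\le s)}}e\Big(\frac{af(\mathbf{c})}{q}\Big).$$ *)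

theory Defs
  imports "HOL-Analysis.Analysis" "HOL-Number_Theory.Cong"
begin

definition e :: "real \<Rightarrow> complex" where
  "e z = exp (2 * of_real pi * \<i> * of_real z)"

definition qform :: "nat \<Rightarrow> (nat \<Rightarrow> nat \<Rightarrow> int) \<Rightarrow> (nat \<Rightarrow> int) \<Rightarrow> int" where
  "qform s A c = (\<Sum>i<s. \<Sum>j<s. A i j * c i * c j)"

definition Sstar :: "nat \<Rightarrow> (nat \<Rightarrow> nat \<Rightarrow> int) \<Rightarrow> int \<Rightarrow> int \<Rightarrow> int \<Rightarrow> int \<Rightarrow> complex" where
  "Sstar s A W b q a =
     (\<Sum>c \<in> PiE {..<s} (\<lambda>_. {x::int. 1 \<le> x \<and> x \<le> q * W \<and> coprime x q \<and> [x = b] (mod W)}).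
        e (real_of_int (a * qform s A c) / real_of_int q))"

end

theory Submission
  imports Defs
begin

definition red :: "int \<Rightarrow> int \<Rightarrow> int" where
  "red M x = (x - 1) mod M + 1"

lemma red_bounds: "M > 0 \<Longrightarrow> 1 \<le> red M x \<and> red M x \<le> M"
  unfolding red_def using pos_mod_bound[of M "x - 1"] pos_mod_sign[of M "x - 1"] by linarith

lemma red_cong: "[red M x = x] (mod M)"
  unfolding red_def cong_def by (metis diff_add_cancel mod_add_left_eq mod_mod_trivial)

lemma red_id: "1 \<le> x \<Longrightarrow> x \<le> M \<Longrightarrow> red M x = x"
  unfolding red_def by simp

lemma red_eq: "[x = y] (mod M) \<Longrightarrow> red M x = red M y"
  unfolding red_def cong_def by (metis mod_diff_left_eq)

lemma e_add: "e (x + y) = e x * e y"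
  unfolding e_def by (simp add: distrib_left distrib_right exp_add)

lemma e_int: "e (real_of_int n) = 1"
proof -
  have "e (real_of_int n) = exp ((2 * of_int n * pi) * \<i>)"
    unfolding e_def by (simp add: mult_ac)
  also have "\<dots> = 1" by (rule exp_integer_2pi) simp
  finally show ?thesis .
qed

lemma qform_cong:
  assumes "\<And>i. i < s \<Longrightarrow> [c i = d i] (mod m)"
  shows "[qform s A c = qform s A d] (mod m)"
  unfolding qform_def
  by (intro cong_sum cong_mult cong_refl) (auto intro: assms)

lemma key:
  fixes q1 q2 q1bar q2bar a f f1 f2 :: int
  assumes "q1 > 0" "q2 > 0" "coprime q1 q2"
    and "[q2 * q2bar = 1] (mod q1)" "[q1 * q1bar = 1] (mod q2)"
    and "[f1 = f] (mod q1)" "[f2 = f] (mod q2)"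
  shows "e (real_of_int (a * f) / real_of_int (q1 * q2)) =
         e (real_of_int (a * q2bar * f1) / real_of_int q1) *
         e (real_of_int (a * q1bar * f2) / real_of_int q2)"
proof -
  define D where "D = a*f - a*q2bar*q2*f1 - a*q1bar*q1*f2"
  obtain k where qk: "1 = q2*q2bar + q1*k" using assms(4) cong_iff_lin by blast
  obtain j where fj: "f = f1 + q1*j" using assms(6) cong_iff_lin by blast
  obtain k' where qk': "1 = q1*q1bar + q2*k'" using assms(5) cong_iff_lin by blast
  obtain j' where fj': "f = f2 + q2*j'" using assms(7) cong_iff_lin by blast
  have "D = q1*(a*j + a*k*f1 - a*q1bar*f2)" unfolding D_def using fj qk by algebra
  hence d1: "q1 dvd D" by simp
  have "D = q2*(a*j' + a*k'*f2 - a*q2bar*f1)" unfolding D_def using fj' qk' by algebra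
  hence d2: "q2 dvd D" by simp
  have "q1 * q2 dvd D" using d1 d2 assms(3) by (rule divides_mult)
  then obtain n where Dn: "D = q1 * q2 * n" by blast
  have "a * f = a*q2bar*f1*q2 + a*q1bar*f2*q1 + q1*q2*n" using Dn unfolding D_def by algebra
  hence "real_of_int (a * f) = real_of_int (a*q2bar*f1*q2 + a*q1bar*f2*q1 + q1*q2*n)" by simp
  hence eq: "real_of_int (a * f) / real_of_int (q1 * q2) =
     (real_of_int (a * q2bar * f1) / real_of_int q1 +
      real_of_int (a * q1bar * f2) / real_of_int q2) + real_of_int n"
    using assms(1,2) by (simp add: field_simps)
  show ?thesis unfolding eq e_add e_int by simp
qed

theorem lemma2p1:
  fixes s :: nat and A :: "nat \<Rightarrow> nat \<Rightarrow> int"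
    and a b q1 q2 W1 W2 q1bar q2bar :: int
  assumes "q1 > 0" "q2 > 0" "W1 > 0" "W2 > 0"
    and "coprime (q1 * W1) (q2 * W2)"
    and "[q2 * q2bar = 1] (mod q1)"
    and "[q1 * q1bar = 1] (mod q2)"
  shows "Sstar s A (W1 * W2) b (q1 * q2) a =
         Sstar s A W1 b q1 (a * q2bar) * Sstar s A W2 b q2 (a * q1bar)"
proof -
  define M1 where "M1 = q1 * W1"
  define M2 where "M2 = q2 * W2"
  have M1p: "M1 > 0" and M2p: "M2 > 0" using assms(1-4) by (simp_all add: M1_def M2_def)
  have cop: "coprime M1 M2" using assms(5) by (simp add: M1_def M2_def)
  have cq: "coprime q1 q2" and cW: "coprime W1 W2" using assms(5) by simp_all
  obtain u v where uv: "u * M2 + v * M1 = 1"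
    using bezout_int[of M2 M1] cop by (metis coprime_imp_gcd_eq_1 gcd.commute)
  define h where "h y1 y2 = red (M1 * M2) (y1 * u * M2 + y2 * v * M1)" for y1 y2
  have h1: "[h y1 y2 = y1] (mod M1)" for y1 y2
  proof -
    have "[h y1 y2 = y1 * u * M2 + y2 * v * M1] (mod M1)"
      unfolding h_def using red_cong cong_modulus_mult by blast
    moreover have "[y1 * u * M2 + y2 * v * M1 = y1] (mod M1)"
    proof -
      have "y1 = (y1 * u * M2 + y2 * v * M1) + M1 * (y1 * v - y2 * v)" using uv by algebra
      thus ?thesis unfolding cong_iff_lin by blast
    qed
    ultimately show ?thesis by (rule cong_trans)
  qed
  have h2: "[h y1 y2 = y2] (mod M2)" for y1 y2
  proof -
    have "[h y1 y2 = y1 * u * M2 + y2 * v * M1] (mod M2)"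
      unfolding h_def using red_cong cong_modulus_mult by (metis mult.commute)
    moreover have "[y1 * u * M2 + y2 * v * M1 = y2] (mod M2)"
    proof -
      have "y2 = (y1 * u * M2 + y2 * v * M1) + M2 * (y2 * u - y1 * u)" using uv by algebra
      thus ?thesis unfolding cong_iff_lin by blast
    qed
    ultimately show ?thesis by (rule cong_trans)
  qed
  have hb: "1 \<le> h y1 y2 \<and> h y1 y2 \<le> M1 * M2" for y1 y2
    unfolding h_def using red_bounds M1p M2p by simp
  define X where "X = {x::int. 1 \<le> x \<and> x \<le> q1 * q2 * (W1 * W2) \<and> coprime x (q1 * q2) \<and> [x = b] (mod W1 * W2)}"
  define Y1 where "Y1 = {x::int. 1 \<le> x \<and> x \<le> q1 * W1 \<and> coprime x q1 \<and> [x = b] (mod W1)}"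
  define Y2 where "Y2 = {x::int. 1 \<le> x \<and> x \<le> q2 * W2 \<and> coprime x q2 \<and> [x = b] (mod W2)}"
  have MM: "q1 * q2 * (W1 * W2) = M1 * M2" by (simp add: M1_def M2_def mult_ac)
  have P1: "red M1 x \<in> Y1" if "x \<in> X" for x
  proof -
    have c: "[red M1 x = x] (mod M1)" by (rule red_cong)
    have "[red M1 x = x] (mod q1)" "[red M1 x = x] (mod W1)" using c unfolding M1_def
      by (auto intro: cong_modulus_mult simp: mult.commute[of q1])
    moreover have "coprime x q1" "[x = b] (mod W1)" using that unfolding X_def
      by (auto intro: cong_modulus_mult)
    ultimately show ?thesis unfolding Y1_def using red_bounds[OF M1p, of x]
      by (auto simp: M1_def intro: cong_trans dest: cong_sym cong_imp_coprime)
  qed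
  have P2: "red M2 x \<in> Y2" if "x \<in> X" for x
  proof -
    have c: "[red M2 x = x] (mod M2)" by (rule red_cong)
    have "[red M2 x = x] (mod q2)" "[red M2 x = x] (mod W2)" using c unfolding M2_def
      by (auto intro: cong_modulus_mult simp: mult.commute[of q2])
    moreover have "coprime x q2" "[x = b] (mod W2)" using that unfolding X_def
      by (auto intro: cong_modulus_mult simp: mult.commute[of q1] mult.commute[of W1])
    ultimately show ?thesis unfolding Y2_def using red_bounds[OF M2p, of x]
      by (auto simp: M2_def intro: cong_trans dest: cong_sym cong_imp_coprime)
  qed
  have P3: "h y1 y2 \<in> X" if "y1 \<in> Y1" "y2 \<in> Y2" for y1 y2
  proof -
    have a1: "[h y1 y2 = y1] (mod q1)" "[h y1 y2 = y1] (mod W1)"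
      using h1[of y1 y2] unfolding M1_def
      by (auto intro: cong_modulus_mult simp: mult.commute[of q1])
    have a2: "[h y1 y2 = y2] (mod q2)" "[h y1 y2 = y2] (mod W2)"
      using h2[of y1 y2] unfolding M2_def
      by (auto intro: cong_modulus_mult simp: mult.commute[of q2])
    have "coprime (h y1 y2) q1" using a1(1) that(1) unfolding Y1_def
      by (auto dest: cong_sym cong_imp_coprime)
    moreover have "coprime (h y1 y2) q2" using a2(1) that(2) unfolding Y2_def
      by (auto dest: cong_sym cong_imp_coprime)
    moreover have "[h y1 y2 = b] (mod W1)" using a1(2) that(1) unfolding Y1_def
      by (auto intro: cong_trans)
    moreover have "[h y1 y2 = b] (mod W2)" using a2(2) that(2) unfolding Y2_def
      by (auto intro: cong_trans)
    ultimately show ?thesis unfolding X_def MM using hb[of y1 y2] cW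
      by (auto intro: coprime_cong_mult)
  qed
  have P4: "h (red M1 x) (red M2 x) = x" if "x \<in> X" for x
  proof -
    have "[h (red M1 x) (red M2 x) = x] (mod M1)" using h1 red_cong by (rule cong_trans)
    moreover have "[h (red M1 x) (red M2 x) = x] (mod M2)" using h2 red_cong by (rule cong_trans)
    ultimately have "[h (red M1 x) (red M2 x) = x] (mod M1 * M2)" using cop
      by (rule coprime_cong_mult)
    hence "red (M1 * M2) (h (red M1 x) (red M2 x)) = red (M1 * M2) x" by (rule red_eq)
    moreover have "red (M1 * M2) (h (red M1 x) (red M2 x)) = h (red M1 x) (red M2 x)"
      using hb by (simp add: red_id)
    moreover have "red (M1 * M2) x = x" using that unfolding X_def MM by (simp add: red_id)
    ultimately show ?thesis by simp
  qed
  have P5: "red M1 (h y1 y2) = y1" if "y1 \<in> Y1" for y1 y2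
    using that red_eq[OF h1[of y1 y2]] red_id unfolding Y1_def M1_def by simp
  have P6: "red M2 (h y1 y2) = y2" if "y2 \<in> Y2" for y1 y2
    using that red_eq[OF h2[of y1 y2]] red_id unfolding Y2_def M2_def by simp
  define I where "I = {..<s}"
  define \<phi> where "\<phi> c = (restrict (\<lambda>i. red M1 (c i)) I, restrict (\<lambda>i. red M2 (c i)) I)" for c :: "nat \<Rightarrow> int"
  define \<psi> where "\<psi> p = restrict (\<lambda>i. h (fst p i) (snd p i)) I" for p :: "(nat \<Rightarrow> int) \<times> (nat \<Rightarrow> int)"
  have bij: "bij_betw \<phi> (PiE I (\<lambda>_. X)) (PiE I (\<lambda>_. Y1) \<times> PiE I (\<lambda>_. Y2))"
  proof (rule bij_betw_byWitness[where f' = \<psi>])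
    show "\<forall>c\<in>PiE I (\<lambda>_. X). \<psi> (\<phi> c) = c"
      using P4 by (auto simp: \<phi>_def \<psi>_def PiE_iff extensional_def fun_eq_iff)
    show "\<forall>p\<in>PiE I (\<lambda>_. Y1) \<times> PiE I (\<lambda>_. Y2). \<phi> (\<psi> p) = p"
      using P5 P6 by (auto simp: \<phi>_def \<psi>_def PiE_iff extensional_def fun_eq_iff)
    show "\<phi> ` PiE I (\<lambda>_. X) \<subseteq> PiE I (\<lambda>_. Y1) \<times> PiE I (\<lambda>_. Y2)"
      using P1 P2 by (auto simp: \<phi>_def PiE_iff)
    show "\<psi> ` (PiE I (\<lambda>_. Y1) \<times> PiE I (\<lambda>_. Y2)) \<subseteq> PiE I (\<lambda>_. X)"
      using P3 by (auto simp: \<psi>_def PiE_iff)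
  qed
  define G where "G p = e (real_of_int (a * q2bar * qform s A (fst p)) / real_of_int q1) *
      e (real_of_int (a * q1bar * qform s A (snd p)) / real_of_int q2)" for p
  have GF: "G (\<phi> c) = e (real_of_int (a * qform s A c) / real_of_int (q1 * q2))"
    if "c \<in> PiE I (\<lambda>_. X)" for c
  proof -
    have "[qform s A (fst (\<phi> c)) = qform s A c] (mod q1)"
    proof (rule qform_cong)
      fix i assume "i < s"
      thus "[fst (\<phi> c) i = c i] (mod q1)" using red_cong[of M1 "c i"] unfolding M1_def \<phi>_def I_def
        by (auto intro: cong_modulus_mult)
    qed
    moreover have "[qform s A (snd (\<phi> c)) = qform s A c] (mod q2)"
    proof (rule qform_cong)
      fix i assume "i < s"
      thus "[snd (\<phi> c) i = c i] (mod q2)" using red_cong[of M2 "c i"] unfolding M2_def \<phi>_def I_def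
        by (auto intro: cong_modulus_mult)
    qed
    ultimately show ?thesis unfolding G_def
      using key[OF assms(1,2) cq assms(6,7)] by simp
  qed
  have "Sstar s A W1 b q1 (a * q2bar) * Sstar s A W2 b q2 (a * q1bar)
      = (\<Sum>p \<in> PiE I (\<lambda>_. Y1) \<times> PiE I (\<lambda>_. Y2). G p)"
    unfolding Sstar_def G_def I_def Y1_def Y2_def
    by (simp add: sum_product sum.cartesian_product case_prod_beta)
  also have "\<dots> = (\<Sum>c \<in> PiE I (\<lambda>_. X). G (\<phi> c))"
    using sum.reindex_bij_betw[OF bij, of G] by simp
  also have "\<dots> = (\<Sum>c \<in> PiE I (\<lambda>_. X). e (real_of_int (a * qform s A c) / real_of_int (q1 * q2)))"
    using GF by (rule sum.cong[OF refl])
  also have "\<dots> = Sstar s A (W1 * W2) b (q1 * q2) a"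
    unfolding Sstar_def X_def I_def by (simp add: mult_ac)
  finally show ?thesis by simp
qed

end
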